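(* Let $t>0$. There exists a sequence $(t_n)$ with $t_n\to t$ such that for all $u,v\in\mathcal D$: if $(q_n^{(u,v)})$ converges in $(\mathcal D,d)$, then $\lim_n \Delta q_n^{(u,v)}(t_n)=\Delta\big(\lim_n q_n^{(u,v)}\big)(t)$.
   Context: Let $\pi=(\pi_n)_{n\ge1}$ be a sequence of partitions $\pi_n=(t^n_0,\dots,t^n_{k_n})$ with $0=t^n_0<\dots<t^n_{k_n}<\infty$, $t^n_{k_n}\uparrow\infty$, and mesh tending to $0$ on compacts; sums over $i$ run over $0\le i<k_n$. $\mathcal D$ is the space of càdlàg functions $[0,\infty)\to\mathbb R$ with a metric $d$ inducing the Skorokhod $J_1$ topology. For $f\in\mathcal D$, $\Delta f(s)=f(s)-f(s-)$. For $u,v\in\mathcal D$: $q_n^{(u,v)}(s)=\sum_{i:\,t^n_i\le s}(u(t^n_{i+1})-u(t^n_i))(v(t^n_{i+1})-v(t^n_i))$. *)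

theory Defs
  imports "HOL-Analysis.Analysis"
begin

text \<open>A sequence of partitions: pt n i = t^n_i for i \<le> k n.\<close>
definition partition_seq :: "(nat \<Rightarrow> nat \<Rightarrow> real) \<Rightarrow> (nat \<Rightarrow> nat) \<Rightarrow> bool" where
  "partition_seq pt k \<longleftrightarrow>
     (\<forall>n. pt n 0 = 0) \<and>
     (\<forall>n i. i < k n \<longrightarrow> pt n i < pt n (Suc i)) \<and>
     mono (\<lambda>n. pt n (k n)) \<and>
     filterlim (\<lambda>n. pt n (k n)) at_top sequentially \<and>
     (\<forall>T>0. \<forall>e>0. \<forall>\<^sub>F n in sequentially.
         \<forall>i<k n. pt n i \<le> T \<longrightarrow> pt n (Suc i) - pt n i < e)"

text \<open>Cadlag functions on [0,oo) (values on negative reals are irrelevant).\<close>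
definition cadlag :: "(real \<Rightarrow> real) \<Rightarrow> bool" where
  "cadlag f \<longleftrightarrow> (\<forall>s\<ge>0. (f \<longlongrightarrow> f s) (at_right s)) \<and>
                 (\<forall>s>0. \<exists>l. (f \<longlongrightarrow> l) (at_left s))"

text \<open>Jump Delta f(s) = f(s) - f(s-), with the convention f(0-) = f(0).\<close>
definition jump :: "(real \<Rightarrow> real) \<Rightarrow> real \<Rightarrow> real" where
  "jump f s = (if s \<le> 0 then 0 else f s - Lim (at_left s) f)"

definition time_change :: "(real \<Rightarrow> real) \<Rightarrow> bool" where
  "time_change l \<longleftrightarrow> l 0 = 0 \<and> continuous_on {0..} l \<and> strict_mono_on {0..} l \<and>
                      l ` {0..} = {0..}"

text \<open>Convergence in the Skorokhod J1 topology on D[0,oo)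
  (Jacod--Shiryaev, Thm VI.1.14).\<close>
definition J1_conv :: "(nat \<Rightarrow> real \<Rightarrow> real) \<Rightarrow> (real \<Rightarrow> real) \<Rightarrow> bool" where
  "J1_conv fs f \<longleftrightarrow> (\<exists>lam. (\<forall>n. time_change (lam n)) \<and>
      (\<forall>e>0. \<forall>\<^sub>F n in sequentially. \<forall>s\<ge>0. \<bar>lam n s - s\<bar> < e) \<and>
      (\<forall>T\<ge>0. \<forall>e>0. \<forall>\<^sub>F n in sequentially. \<forall>s\<in>{0..T}. \<bar>fs n (lam n s) - f s\<bar> < e))"

definition qcov :: "(nat \<Rightarrow> nat \<Rightarrow> real) \<Rightarrow> (nat \<Rightarrow> nat) \<Rightarrow> nat \<Rightarrow>
                     (real \<Rightarrow> real) \<Rightarrow> (real \<Rightarrow> real) \<Rightarrow> real \<Rightarrow> real" where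
  "qcov pt k n u v s = (\<Sum>i\<in>{i. i < k n \<and> pt n i \<le> s}.
      (u (pt n (Suc i)) - u (pt n i)) * (v (pt n (Suc i)) - v (pt n i)))"

end

theory Submission
  imports Defs
begin

lemma ps_mono:
  assumes ps: "partition_seq pt k" and "i < j" and "j \<le> k n"
  shows "pt n i < pt n j"
  using assms(2,3)
proof (induction j)
  case 0 then show ?case by simp
next
  case (Suc j)
  have st: "pt n j < pt n (Suc j)" using ps Suc.prems unfolding partition_seq_def by auto
  show ?case
  proof (cases "i = j")
    case True then show ?thesis using st by simp
  next
    case False then have "pt n i < pt n j" using Suc by auto
    then show ?thesis using st by linarith
  qed
qed

lemma ps_nonneg:
  assumes ps: "partition_seq pt k" and "i \<le> k n"
  shows "pt n i \<ge> 0"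
proof (cases "i = 0")
  case True then show ?thesis using ps unfolding partition_seq_def by simp
next
  case False
  then have "pt n 0 < pt n i" using ps_mono[OF ps, of 0 i n] assms by simp
  then show ?thesis using ps unfolding partition_seq_def by simp
qed

lemma qcov_left_lim:
  assumes ps: "partition_seq pt k" and s: "s > 0"
  shows "(qcov pt k n u v \<longlongrightarrow> (\<Sum>i\<in>{i. i < k n \<and> pt n i < s}.
      (u (pt n (Suc i)) - u (pt n i)) * (v (pt n (Suc i)) - v (pt n i)))) (at_left s)"
proof (rule tendsto_eventually)
  let ?A = "{i. i < k n \<and> pt n i < s}"
  have fin: "finite ?A" by simp
  have "\<forall>i\<in>?A. \<forall>\<^sub>F x in at_left s. pt n i < x"
  proof
    fix i assume "i \<in> ?A"
    then have "pt n i < s" by simp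
    from eventually_at_left_real[OF this] show "\<forall>\<^sub>F x in at_left s. pt n i < x"
      by (rule eventually_mono) simp
  qed
  from eventually_ball_finite[OF fin this]
  have e1: "\<forall>\<^sub>F x in at_left s. \<forall>i\<in>?A. pt n i < x" .
  have e2: "\<forall>\<^sub>F x in at_left s. x < s"
    using eventually_at_left_real[OF s] by (rule eventually_mono) simp
  show "\<forall>\<^sub>F x in at_left s. qcov pt k n u v x = (\<Sum>i\<in>?A.
      (u (pt n (Suc i)) - u (pt n i)) * (v (pt n (Suc i)) - v (pt n i)))"
    using e1 e2
  proof eventually_elim
    case (elim x)
    then have "{i. i < k n \<and> pt n i \<le> x} = ?A" by force
    then show ?case unfolding qcov_def by simp
  qed
qed

lemma qcov_jump:
  assumes ps: "partition_seq pt k" and s: "s > 0"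
  shows "jump (qcov pt k n u v) s = (\<Sum>i\<in>{i. i < k n \<and> pt n i = s}.
      (u (pt n (Suc i)) - u (pt n i)) * (v (pt n (Suc i)) - v (pt n i)))"
proof -
  let ?f = "\<lambda>i. (u (pt n (Suc i)) - u (pt n i)) * (v (pt n (Suc i)) - v (pt n i))"
  have L: "Lim (at_left s) (qcov pt k n u v) = sum ?f {i. i < k n \<and> pt n i < s}"
    by (rule tendsto_Lim[OF trivial_limit_at_left_real qcov_left_lim[OF ps s]])
  have U: "{i. i < k n \<and> pt n i \<le> s} = {i. i < k n \<and> pt n i < s} \<union> {i. i < k n \<and> pt n i = s}"
    by auto
  have "sum ?f {i. i < k n \<and> pt n i \<le> s} = sum ?f {i. i < k n \<and> pt n i < s} + sum ?f {i. i < k n \<and> pt n i = s}"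
    unfolding U by (rule sum.union_disjoint) auto
  then show ?thesis using s unfolding jump_def L qcov_def by simp
qed

lemma qcov_jump_at:
  assumes ps: "partition_seq pt k" and s: "pt n j > 0" and j: "j < k n"
  shows "jump (qcov pt k n u v) (pt n j) =
      (u (pt n (Suc j)) - u (pt n j)) * (v (pt n (Suc j)) - v (pt n j))"
proof -
  have "{i. i < k n \<and> pt n i = pt n j} = {j}"
  proof safe
    fix i assume i: "i < k n" "pt n i = pt n j"
    show "i = j"
    proof (rule ccontr)
      assume "i \<noteq> j"
      then have "i < j \<or> j < i" by arith
      then show False using ps_mono[OF ps, of i j n] ps_mono[OF ps, of j i n] i j by auto
    qed
  qed (use j in auto)
  then show ?thesis using qcov_jump[OF ps s] by simp
qed

lemma qcov_jump_none:
  assumes ps: "partition_seq pt k" and s: "s > 0" and j: "\<forall>j<k n. pt n j \<noteq> s"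
  shows "jump (qcov pt k n u v) s = 0"
proof -
  have e: "{i. i < k n \<and> pt n i = s} = {}" using j by auto
  show ?thesis by (simp only: qcov_jump[OF ps s] e sum.empty)
qed


lemma cadlag_right_osc:
  assumes "cadlag f" "t \<ge> 0" "e > 0"
  shows "\<exists>d>0. \<forall>x. t \<le> x \<and> x < t + d \<longrightarrow> \<bar>f x - f t\<bar> < e"
proof -
  have "(f \<longlongrightarrow> f t) (at_right t)" using assms unfolding cadlag_def by auto
  then have "\<forall>\<^sub>F x in at_right t. dist (f x) (f t) < e" using assms(3) tendsto_iff by blast
  then obtain b where b: "b > t" "\<forall>y>t. y < b \<longrightarrow> dist (f y) (f t) < e"
    using eventually_at_right[of t "t+1"] by auto
  show ?thesis
  proof (intro exI[of _ "b - t"] conjI allI impI)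
    fix x assume x: "t \<le> x \<and> x < t + (b - t)"
    show "\<bar>f x - f t\<bar> < e"
    proof (cases "x = t")
      case True then show ?thesis using assms by simp
    next
      case False then show ?thesis using b x by (auto simp: dist_real_def)
    qed
  qed (use b in auto)
qed

lemma cadlag_left_osc:
  assumes "cadlag f" "t > 0"
  shows "\<exists>l. (f \<longlongrightarrow> l) (at_left t) \<and> (\<forall>e>0. \<exists>d>0. \<forall>x. t - d < x \<and> x < t \<longrightarrow> \<bar>f x - l\<bar> < e)"
proof -
  obtain l where l: "(f \<longlongrightarrow> l) (at_left t)" using assms unfolding cadlag_def by auto
  have "\<exists>d>0. \<forall>x. t - d < x \<and> x < t \<longrightarrow> \<bar>f x - l\<bar> < e" if e: "e > 0" for e
  proof -
    have "\<forall>\<^sub>F x in at_left t. dist (f x) l < e" using l e tendsto_iff by blast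
    then obtain b where b: "b < t" "\<forall>y>b. y < t \<longrightarrow> dist (f y) l < e"
      using eventually_at_left[of "t - 1" t] by auto
    show ?thesis
      by (rule exI[of _ "t - b"]) (use b in \<open>auto simp: dist_real_def\<close>)
  qed
  then show ?thesis using l by blast
qed

lemma left_lim_bound:
  fixes q :: "real \<Rightarrow> real"
  assumes "(q \<longlongrightarrow> ls) (at_left s)" "\<forall>\<^sub>F x in at_left s. \<bar>q x - c\<bar> \<le> e"
  shows "\<bar>ls - c\<bar> \<le> e"
proof -
  have "((\<lambda>x. \<bar>q x - c\<bar>) \<longlongrightarrow> \<bar>ls - c\<bar>) (at_left s)"
    by (intro tendsto_intros assms(1))
  from tendsto_upperbound[OF this assms(2) trivial_limit_at_left_real] show ?thesis .
qed

lemma cadlag_jump_small: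
  assumes q: "cadlag q" and t: "t > 0" and e: "e > 0"
  shows "\<exists>d>0. \<forall>s. s > 0 \<longrightarrow> s \<noteq> t \<longrightarrow> \<bar>s - t\<bar> < d \<longrightarrow> \<bar>jump q s\<bar> \<le> e"
proof -
  obtain l where l: "(q \<longlongrightarrow> l) (at_left t)"
    and lo: "\<forall>e>0. \<exists>d>0. \<forall>x. t - d < x \<and> x < t \<longrightarrow> \<bar>q x - l\<bar> < e"
    using cadlag_left_osc[OF q t] by blast
  obtain d1 where d1: "d1 > 0" "\<forall>x. t - d1 < x \<and> x < t \<longrightarrow> \<bar>q x - l\<bar> < e/2"
    using lo e by (meson half_gt_zero)
  obtain d2 where d2: "d2 > 0" "\<forall>x. t \<le> x \<and> x < t + d2 \<longrightarrow> \<bar>q x - q t\<bar> < e/2"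
    using cadlag_right_osc[OF q _, of t "e/2"] t e by auto
  show ?thesis
  proof (intro exI[of _ "min d1 d2"] conjI allI impI)
    fix s assume s: "s > 0" "s \<noteq> t" "\<bar>s - t\<bar> < min d1 d2"
    obtain ls where ls: "(q \<longlongrightarrow> ls) (at_left s)" using q s unfolding cadlag_def by auto
    have J: "jump q s = q s - ls" unfolding jump_def using s tendsto_Lim[OF trivial_limit_at_left_real ls] by simp
    have "\<bar>ls - q s\<bar> \<le> e"
    proof (cases "s < t")
      case True
      have "\<forall>\<^sub>F x in at_left s. x \<in> {t - d1<..<s}" by (rule eventually_at_left_real) (use s True in auto)
      then have "\<forall>\<^sub>F x in at_left s. \<bar>q x - q s\<bar> \<le> e"
      proof (rule eventually_mono)
        fix x assume "x \<in> {t - d1<..<s}"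
        then have "\<bar>q x - l\<bar> < e/2" "\<bar>q s - l\<bar> < e/2" using d1 s True by auto
        then show "\<bar>q x - q s\<bar> \<le> e" by linarith
      qed
      from left_lim_bound[OF ls this] show ?thesis .
    next
      case False
      then have st: "s > t" using s by simp
      have "\<forall>\<^sub>F x in at_left s. x \<in> {t<..<s}" by (rule eventually_at_left_real) (use st in auto)
      then have "\<forall>\<^sub>F x in at_left s. \<bar>q x - q s\<bar> \<le> e"
      proof (rule eventually_mono)
        fix x assume "x \<in> {t<..<s}"
        then have "\<bar>q x - q t\<bar> < e/2" "\<bar>q s - q t\<bar> < e/2" using d2 s st by auto
        then show "\<bar>q x - q s\<bar> \<le> e" by linarith
      qed
      from left_lim_bound[OF ls this] show ?thesis .
    qed
    then show "\<bar>jump q s\<bar> \<le> e" unfolding J by linarith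
  qed (use d1 d2 in auto)
qed

lemma time_change_at_left:
  assumes l: "time_change l" and s: "s > 0"
  shows "filterlim l (at_left (l s)) (at_left s)"
proof -
  have co: "continuous_on {0..} l" and sm: "strict_mono_on {0..} l"
    using l unfolding time_change_def by auto
  have "continuous_on {0<..} l" by (rule continuous_on_subset[OF co]) auto
  then have "isCont l s" using continuous_on_eq_continuous_at[of "{0<..}" l] s by auto
  then have "(l \<longlongrightarrow> l s) (at s)" by (simp add: isCont_def)
  then have T: "(l \<longlongrightarrow> l s) (at_left s)" by (rule tendsto_mono[OF at_le, rotated]) simp
  have "\<forall>\<^sub>F x in at_left s. x \<in> {0<..<s}" by (rule eventually_at_left_real) (use s in auto)
  then have "\<forall>\<^sub>F x in at_left s. l x \<in> {..<l s} \<and> l x \<noteq> l s"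
  proof (rule eventually_mono)
    fix x assume "x \<in> {0<..<s}"
    then have "l x < l s" using sm s unfolding strict_mono_on_def by auto
    then show "l x \<in> {..<l s} \<and> l x \<noteq> l s" by auto
  qed
  then show ?thesis using T by (simp add: filterlim_at)
qed

lemma time_change_pos:
  assumes l: "time_change l" and s: "s > 0"
  shows "l s > 0"
  using l s unfolding time_change_def strict_mono_on_def by force

lemma jump_compare:
  fixes f q :: "real \<Rightarrow> real"
  assumes l: "time_change l" and q: "cadlag q" and s: "s > 0" "s \<le> T"
    and close: "\<forall>x\<in>{0..T}. \<bar>f (l x) - q x\<bar> < e"
    and fL: "(f \<longlongrightarrow> L) (at_left (l s))"
  shows "\<bar>jump f (l s) - jump q s\<bar> \<le> 2 * e"
proof -
  have lsp: "l s > 0" by (rule time_change_pos[OF l s(1)])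
  obtain lq where lq: "(q \<longlongrightarrow> lq) (at_left s)" using q s unfolding cadlag_def by auto
  have J1: "jump q s = q s - lq" unfolding jump_def using s tendsto_Lim[OF trivial_limit_at_left_real lq] by simp
  have J2: "jump f (l s) = f (l s) - L" unfolding jump_def using lsp tendsto_Lim[OF trivial_limit_at_left_real fL] by simp
  have fl: "((\<lambda>x. f (l x)) \<longlongrightarrow> L) (at_left s)"
    by (rule filterlim_compose[OF fL time_change_at_left[OF l s(1)]])
  have D: "((\<lambda>x. f (l x) - q x) \<longlongrightarrow> L - lq) (at_left s)" by (intro tendsto_intros fl lq)
  have "\<forall>\<^sub>F x in at_left s. x \<in> {0<..<s}" by (rule eventually_at_left_real) (use s in auto)
  then have "\<forall>\<^sub>F x in at_left s. \<bar>(f (l x) - q x) - 0\<bar> \<le> e"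
  proof (rule eventually_mono)
    fix x assume "x \<in> {0<..<s}"
    then have "x \<in> {0..T}" using s by auto
    then show "\<bar>(f (l x) - q x) - 0\<bar> \<le> e" using close by fastforce
  qed
  from left_lim_bound[OF D this] have "\<bar>L - lq\<bar> \<le> e" by simp
  moreover have "\<bar>f (l s) - q s\<bar> < e" using close s by auto
  ultimately show ?thesis unfolding J1 J2 by linarith
qed


lemma abs_tri_false:
  fixes x y b b' :: real
  assumes "\<bar>x - y\<bar> < b" "\<bar>x\<bar> \<le> b'" "b + b' \<le> \<bar>y\<bar>"
  shows False
proof -
  have "\<bar>x + (y - x)\<bar> \<le> \<bar>x\<bar> + \<bar>y - x\<bar>" by (rule abs_triangle_ineq)
  then have "\<bar>y\<bar> \<le> \<bar>x\<bar> + \<bar>x - y\<bar>" by (simp add: abs_minus_commute)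
  then show False using assms by linarith
qed

lemma cadlag_osc2:
  assumes f: "cadlag f" and t: "t > 0" and e: "e > 0"
  shows "\<exists>d>0. \<forall>x y. ((t - d < x \<and> x < t \<and> t - d < y \<and> y < t) \<or>
                        (t \<le> x \<and> x < t + d \<and> t \<le> y \<and> y < t + d)) \<longrightarrow> \<bar>f x - f y\<bar> < e"
proof -
  obtain l where lo: "\<forall>e>0. \<exists>d>0. \<forall>x. t - d < x \<and> x < t \<longrightarrow> \<bar>f x - l\<bar> < e"
    using cadlag_left_osc[OF f t] by blast
  obtain d1 where d1: "d1 > 0" "\<forall>x. t - d1 < x \<and> x < t \<longrightarrow> \<bar>f x - l\<bar> < e/2"
    using lo e by (meson half_gt_zero)
  obtain d2 where d2: "d2 > 0" "\<forall>x. t \<le> x \<and> x < t + d2 \<longrightarrow> \<bar>f x - f t\<bar> < e/2"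
    using cadlag_right_osc[OF f _, of t "e/2"] t e by auto
  show ?thesis
  proof (intro exI[of _ "min d1 d2"] conjI allI impI)
    fix x y assume H: "(t - min d1 d2 < x \<and> x < t \<and> t - min d1 d2 < y \<and> y < t) \<or>
                        (t \<le> x \<and> x < t + min d1 d2 \<and> t \<le> y \<and> y < t + min d1 d2)"
    then show "\<bar>f x - f y\<bar> < e"
    proof
      assume "t - min d1 d2 < x \<and> x < t \<and> t - min d1 d2 < y \<and> y < t"
      then have "\<bar>f x - l\<bar> < e/2" "\<bar>f y - l\<bar> < e/2" using d1 by auto
      then show ?thesis by linarith
    next
      assume "t \<le> x \<and> x < t + min d1 d2 \<and> t \<le> y \<and> y < t + min d1 d2"
      then have "\<bar>f x - f t\<bar> < e/2" "\<bar>f y - f t\<bar> < e/2" using d2 by auto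
      then show ?thesis by linarith
    qed
  qed (use d1 d2 in auto)
qed

lemma incr_small:
  assumes ps: "partition_seq pt k" and u: "cadlag u" and v: "cadlag v" and t: "t > 0" and e: "e > 0"
  shows "\<exists>d>0. \<forall>\<^sub>F n in sequentially. \<forall>i j. (i < k n \<and> pt n i < t \<and> t \<le> pt n (Suc i)) \<longrightarrow>
     j < k n \<longrightarrow> j \<noteq> i \<longrightarrow> \<bar>pt n j - t\<bar> < d \<longrightarrow>
     \<bar>(u (pt n (Suc j)) - u (pt n j)) * (v (pt n (Suc j)) - v (pt n j))\<bar> \<le> e"
proof -
  define r where "r = sqrt e"
  have r: "r > 0" "r * r = e" using e unfolding r_def by (auto simp: real_sqrt_mult[symmetric])
  obtain du where du: "du > 0" "\<forall>x y. ((t - du < x \<and> x < t \<and> t - du < y \<and> y < t) \<or>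
                        (t \<le> x \<and> x < t + du \<and> t \<le> y \<and> y < t + du)) \<longrightarrow> \<bar>u x - u y\<bar> < r"
    using cadlag_osc2[OF u t r(1)] by blast
  obtain dv where dv: "dv > 0" "\<forall>x y. ((t - dv < x \<and> x < t \<and> t - dv < y \<and> y < t) \<or>
                        (t \<le> x \<and> x < t + dv \<and> t \<le> y \<and> y < t + dv)) \<longrightarrow> \<bar>v x - v y\<bar> < r"
    using cadlag_osc2[OF v t r(1)] by blast
  define D where "D = min du dv"
  have D: "D > 0" "D \<le> du" "D \<le> dv" using du dv unfolding D_def by auto
  have mesh: "\<forall>\<^sub>F n in sequentially. \<forall>i<k n. pt n i \<le> t + D \<longrightarrow> pt n (Suc i) - pt n i < D/2"
    using ps t D unfolding partition_seq_def by (meson add_pos_pos half_gt_zero)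
  show ?thesis
  proof (intro exI[of _ "D/2"] conjI)
    show "\<forall>\<^sub>F n in sequentially. \<forall>i j. (i < k n \<and> pt n i < t \<and> t \<le> pt n (Suc i)) \<longrightarrow>
     j < k n \<longrightarrow> j \<noteq> i \<longrightarrow> \<bar>pt n j - t\<bar> < D/2 \<longrightarrow>
     \<bar>(u (pt n (Suc j)) - u (pt n j)) * (v (pt n (Suc j)) - v (pt n j))\<bar> \<le> e"
      using mesh
    proof eventually_elim
      case (elim n)
      show ?case
      proof (intro allI impI)
        fix i j assume i: "i < k n \<and> pt n i < t \<and> t \<le> pt n (Suc i)" and j: "j < k n" "j \<noteq> i"
          and jt: "\<bar>pt n j - t\<bar> < D/2"
        have sj: "pt n j < pt n (Suc j)" using ps j unfolding partition_seq_def by auto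
        have P: "((t - D < pt n j \<and> pt n j < t \<and> t - D < pt n (Suc j) \<and> pt n (Suc j) < t) \<or>
                 (t \<le> pt n j \<and> pt n j < t + D \<and> t \<le> pt n (Suc j) \<and> pt n (Suc j) < t + D))"
        proof (cases "j < i")
          case True
          have "pt n (Suc j) \<le> pt n i"
          proof (cases "Suc j = i")
            case False then show ?thesis using ps_mono[OF ps, of "Suc j" i n] True i by auto
          qed simp
          then show ?thesis using i jt sj D by auto
        next
          case False
          then have "Suc i \<le> j" using j by auto
          then have "pt n (Suc i) \<le> pt n j"
          proof (cases "Suc i = j")
            case False then show ?thesis using ps_mono[OF ps, of "Suc i" j n] \<open>Suc i \<le> j\<close> j by auto
          qed simp
          moreover have "pt n j - t < D/2" using jt by (simp only: abs_less_iff)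
          then have "pt n j \<le> t + D" using D by linarith
          then have "pt n (Suc j) - pt n j < D/2" using elim j by blast
          ultimately show ?thesis using i jt sj D by auto
        qed
        have U: "\<bar>u (pt n (Suc j)) - u (pt n j)\<bar> \<le> r"
          using du(2)[rule_format, of "pt n (Suc j)" "pt n j"] P D by force
        have V: "\<bar>v (pt n (Suc j)) - v (pt n j)\<bar> \<le> r"
          using dv(2)[rule_format, of "pt n (Suc j)" "pt n j"] P D by force
        have "\<bar>(u (pt n (Suc j)) - u (pt n j)) * (v (pt n (Suc j)) - v (pt n j))\<bar> \<le> r * r"
          unfolding abs_mult by (rule mult_mono[OF U V]) (use r in auto)
        then show "\<bar>(u (pt n (Suc j)) - u (pt n j)) * (v (pt n (Suc j)) - v (pt n j))\<bar> \<le> e"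
          using r by simp
      qed
    qed
  qed (use D in auto)
qed


theorem lemma3p3:
  fixes pt :: "nat \<Rightarrow> nat \<Rightarrow> real" and k :: "nat \<Rightarrow> nat" and t :: real
  assumes "partition_seq pt k" and "t > 0"
  shows "\<exists>tn :: nat \<Rightarrow> real. tn \<longlonglongrightarrow> t \<and>
    (\<forall>u v. cadlag u \<longrightarrow> cadlag v \<longrightarrow>
       (\<forall>q. cadlag q \<longrightarrow> J1_conv (\<lambda>n. qcov pt k n u v) q \<longrightarrow>
          (\<lambda>n. jump (qcov pt k n u v) (tn n)) \<longlonglongrightarrow> jump q t))"
proof -
  note ps = assms(1) and t = assms(2)
  define ok where "ok n i \<longleftrightarrow> i < k n \<and> pt n i < t \<and> t \<le> pt n (Suc i)" for n i
  have ex: "\<exists>i. ok n i" if big: "t \<le> pt n (k n)" for n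
  proof -
    let ?S = "{i. i \<le> k n \<and> pt n i < t}"
    have fin: "finite ?S" by simp
    have ne: "0 \<in> ?S" using ps t unfolding partition_seq_def by simp
    define m where "m = Max ?S"
    have mS: "m \<in> ?S" unfolding m_def using fin ne by (intro Max_in) auto
    have mmax: "i \<le> m" if "i \<in> ?S" for i unfolding m_def using fin that by simp
    have mk: "m < k n" using mS big by (cases "m = k n") auto
    have "t \<le> pt n (Suc m)"
    proof (rule ccontr)
      assume "\<not> t \<le> pt n (Suc m)"
      then have "Suc m \<in> ?S" using mk by auto
      then show False using mmax by fastforce
    qed
    then show ?thesis using mS mk unfolding ok_def by auto
  qed
  define idx where "idx n = (if t \<le> pt n (k n) then (SOME i. ok n i) else 0)" for n
  have ev_big: "\<forall>\<^sub>F n in sequentially. t \<le> pt n (k n)"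
    using ps unfolding partition_seq_def filterlim_at_top by blast
  have ev_ok: "\<forall>\<^sub>F n in sequentially. ok n (idx n)"
    using ev_big by (rule eventually_mono) (use ex in \<open>auto simp: idx_def intro: someI_ex\<close>)
  define tn where "tn n = pt n (idx n)" for n
  define tn' where "tn' n = pt n (Suc (idx n))" for n
  have idx_le: "idx n \<le> k n" for n
  proof (cases "t \<le> pt n (k n)")
    case True then have "ok n (idx n)" unfolding idx_def using someI_ex[OF ex[OF True]] by simp
    then show ?thesis unfolding ok_def by simp
  qed (simp add: idx_def)
  have tn_nonneg: "tn n \<ge> 0" for n unfolding tn_def using ps_nonneg[OF ps idx_le] .
  have mesh: "\<forall>\<^sub>F n in sequentially. \<forall>i<k n. pt n i \<le> t \<longrightarrow> pt n (Suc i) - pt n i < e"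
    if "e > 0" for e using ps t that unfolding partition_seq_def by blast
  have tn_lim: "tn \<longlonglongrightarrow> t"
  proof (rule tendstoI)
    fix e :: real assume e: "e > 0"
    show "\<forall>\<^sub>F n in sequentially. dist (tn n) t < e"
      using mesh[OF e] ev_ok
    proof eventually_elim
      case (elim n)
      then show ?case unfolding ok_def tn_def dist_real_def by force
    qed
  qed
  have tn'_lim: "tn' \<longlonglongrightarrow> t"
  proof (rule tendstoI)
    fix e :: real assume e: "e > 0"
    show "\<forall>\<^sub>F n in sequentially. dist (tn' n) t < e"
      using mesh[OF e] ev_ok
    proof eventually_elim
      case (elim n)
      then show ?case unfolding ok_def tn'_def dist_real_def by force
    qed
  qed
  show ?thesis
  proof (intro exI[of _ tn] conjI allI impI)
    show "tn \<longlonglongrightarrow> t" by (rule tn_lim)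
    fix u v q assume u: "cadlag u" and v: "cadlag v" and q: "cadlag q"
      and J: "J1_conv (\<lambda>n. qcov pt k n u v) q"
    define a where "a n i = (u (pt n (Suc i)) - u (pt n i)) * (v (pt n (Suc i)) - v (pt n i))" for n i
    define Q where "Q n = qcov pt k n u v" for n
    obtain lu where lu: "(u \<longlongrightarrow> lu) (at_left t)" using u t unfolding cadlag_def by auto
    obtain lv where lv: "(v \<longlongrightarrow> lv) (at_left t)" using v t unfolding cadlag_def by auto
    define c where "c = (u t - lu) * (v t - lv)"
    have tn_left: "filterlim tn (at_left t) sequentially"
      unfolding filterlim_at using tn_lim ev_ok
      by (auto elim: eventually_mono simp: ok_def tn_def)
    have ev_ge: "\<forall>\<^sub>F n in sequentially. tn' n \<in> {t..}"
      using ev_ok by (rule eventually_mono) (auto simp: ok_def tn'_def)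
    have cu: "continuous (at t within {t..}) u" 
      using u t unfolding continuous_within at_within_Ici_at_right cadlag_def by auto
    have cv: "continuous (at t within {t..}) v" 
      using v t unfolding continuous_within at_within_Ici_at_right cadlag_def by auto
    have a_lim: "(\<lambda>n. a n (idx n)) \<longlonglongrightarrow> c"
      unfolding a_def c_def tn_def[symmetric] tn'_def[symmetric]
      by (intro tendsto_intros continuous_within_tendsto_compose[OF cu ev_ge tn'_lim]
          continuous_within_tendsto_compose[OF cv ev_ge tn'_lim]
          filterlim_compose[OF lu tn_left] filterlim_compose[OF lv tn_left])
    have tn_pos: "\<forall>\<^sub>F n in sequentially. tn n > 0" using order_tendstoD(1)[OF tn_lim t] .
    have JQ_eq: "\<forall>\<^sub>F n in sequentially. jump (Q n) (tn n) = a n (idx n)"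
      using tn_pos ev_ok
    proof eventually_elim
      case (elim n)
      then show ?case unfolding Q_def a_def tn_def ok_def
        by (intro qcov_jump_at[OF ps]) auto
    qed
    have JQ: "(\<lambda>n. jump (Q n) (tn n)) \<longlonglongrightarrow> c"
      by (rule Lim_transform_eventually[OF a_lim]) (use JQ_eq in \<open>auto elim: eventually_mono\<close>)
    have key: "jump q t = c"
    proof -
      obtain lam where lamtc: "\<forall>n. time_change (lam n)"
        and lamc: "\<forall>e>0. \<forall>\<^sub>F n in sequentially. \<forall>s\<ge>0. \<bar>lam n s - s\<bar> < e"
        and qc: "\<forall>T\<ge>0. \<forall>e>0. \<forall>\<^sub>F n in sequentially. \<forall>s\<in>{0..T}. \<bar>Q n (lam n s) - q s\<bar> < e"
        using J unfolding J1_conv_def Q_def by blast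
      define T where "T = t + 1"
      have T: "T \<ge> 0" "t < T" using t unfolding T_def by auto
      have JJ: "\<forall>\<^sub>F n in sequentially. \<forall>s. 0 < s \<and> s \<le> T \<longrightarrow> \<bar>jump (Q n) (lam n s) - jump q s\<bar> \<le> 2 * e"
        if e: "e > 0" for e
        using qc[rule_format, OF T(1) e]
      proof (rule eventually_mono)
        fix n assume H: "\<forall>s\<in>{0..T}. \<bar>Q n (lam n s) - q s\<bar> < e"
        show "\<forall>s. 0 < s \<and> s \<le> T \<longrightarrow> \<bar>jump (Q n) (lam n s) - jump q s\<bar> \<le> 2 * e"
        proof (intro allI impI)
          fix s assume s: "0 < s \<and> s \<le> T"
          have pos: "lam n s > 0" using time_change_pos lamtc s by blast
          show "\<bar>jump (Q n) (lam n s) - jump q s\<bar> \<le> 2 * e"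
            using jump_compare[OF lamtc[rule_format] q _ _ H, of s] s
              qcov_left_lim[OF ps pos, of n u v] unfolding Q_def by blast
        qed
      qed
      define rn where "rn n = lam n t" for n
      have r_lim: "(\<lambda>n. jump (Q n) (rn n)) \<longlonglongrightarrow> jump q t"
      proof (rule tendstoI)
        fix e :: real assume e: "e > 0"
        show "\<forall>\<^sub>F n in sequentially. dist (jump (Q n) (rn n)) (jump q t) < e"
          using JJ[of "e/3"] e
        proof -
          have e3: "e/3 > 0" using e by simp
          show ?thesis
          proof (rule eventually_mono[OF JJ[OF e3]])
          fix n assume "\<forall>s. 0 < s \<and> s \<le> T \<longrightarrow> \<bar>jump (Q n) (lam n s) - jump q s\<bar> \<le> 2 * (e/3)"
          then have "\<bar>jump (Q n) (rn n) - jump q t\<bar> \<le> 2 * (e/3)" using t T unfolding rn_def by auto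
          then show "dist (jump (Q n) (rn n)) (jump q t) < e" using e by (simp add: dist_real_def)
        qed
        qed
      qed
      have rn_lim: "rn \<longlonglongrightarrow> t"
      proof (rule tendstoI)
        fix e :: real assume e: "e > 0"
        show "\<forall>\<^sub>F n in sequentially. dist (rn n) t < e"
          using lamc[rule_format, OF e] by (rule eventually_mono) (use t in \<open>auto simp: rn_def dist_real_def\<close>)
      qed
      define sn where "sn n = (SOME s. s \<ge> 0 \<and> lam n s = tn n)" for n
      have sn: "sn n \<ge> 0 \<and> lam n (sn n) = tn n" for n
      proof -
        have "tn n \<in> lam n ` {0..}" using lamtc tn_nonneg unfolding time_change_def by auto
        then have "\<exists>s. s \<ge> 0 \<and> lam n s = tn n" by auto
        from someI_ex[OF this] show ?thesis unfolding sn_def .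
      qed
      have sn_lim: "sn \<longlonglongrightarrow> t"
      proof (rule tendstoI)
        fix e :: real assume e: "e > 0"
        have e2: "e/2 > 0" using e by simp
        show "\<forall>\<^sub>F n in sequentially. dist (sn n) t < e"
          using lamc[rule_format, OF e2] tendstoD[OF tn_lim e2]
        proof eventually_elim
          case (elim n)
          then have "\<bar>lam n (sn n) - sn n\<bar> < e/2" using sn by blast
          then have A: "\<bar>tn n - sn n\<bar> < e/2" using sn[of n] by simp
          have B: "\<bar>tn n - t\<bar> < e/2" using elim by (simp add: dist_real_def)
          show ?case using A B unfolding dist_real_def abs_less_iff by linarith
        qed
      qed
      have s_lim: "(\<lambda>n. jump q (sn n)) \<longlonglongrightarrow> c"
      proof (rule tendstoI)
        fix e :: real assume e: "e > 0"
        have e2: "e/2 > 0" "e/4 > 0" using e by auto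
        show "\<forall>\<^sub>F n in sequentially. dist (jump q (sn n)) c < e"
          using JJ[OF e2(2)] tendstoD[OF JQ e2(1)] order_tendstoD(1)[OF sn_lim t] order_tendstoD(2)[OF sn_lim T(2)]
        proof eventually_elim
          case (elim n)
          then have "\<bar>jump (Q n) (lam n (sn n)) - jump q (sn n)\<bar> \<le> 2 * (e/4)" by auto
          then have A: "\<bar>jump (Q n) (tn n) - jump q (sn n)\<bar> \<le> 2 * (e/4)" using sn[of n] by simp
          have B: "\<bar>jump (Q n) (tn n) - c\<bar> < e/2" using elim by (simp add: dist_real_def)
          show ?case using A B unfolding dist_real_def abs_less_iff abs_le_iff by linarith
        qed
      qed
      show ?thesis
      proof (cases "c = 0")
        case False
        then have c2: "\<bar>c\<bar>/2 > 0" by simp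
        obtain d where d: "d > 0" "\<forall>s. s > 0 \<longrightarrow> s \<noteq> t \<longrightarrow> \<bar>s - t\<bar> < d \<longrightarrow> \<bar>jump q s\<bar> \<le> \<bar>c\<bar>/2"
          using cadlag_jump_small[OF q t c2] by blast
        have "\<forall>\<^sub>F n in sequentially. jump q (sn n) = jump q t"
          using tendstoD[OF s_lim c2] tendstoD[OF sn_lim d(1)] order_tendstoD(1)[OF sn_lim t]
        proof eventually_elim
          case (elim n)
          have "sn n = t"
          proof (rule ccontr)
            assume "sn n \<noteq> t"
            then have A: "\<bar>jump q (sn n)\<bar> \<le> \<bar>c\<bar>/2" using d elim by (auto simp: dist_real_def)
            have B: "\<bar>jump q (sn n) - c\<bar> < \<bar>c\<bar>/2" using elim by (simp add: dist_real_def)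
            have "\<bar>jump q (sn n) + (c - jump q (sn n))\<bar> \<le> \<bar>jump q (sn n)\<bar> + \<bar>c - jump q (sn n)\<bar>"
              by (rule abs_triangle_ineq)
            then have "\<bar>c\<bar> \<le> \<bar>jump q (sn n)\<bar> + \<bar>jump q (sn n) - c\<bar>" by (simp add: abs_minus_commute)
            then show False using A B by linarith
          qed
          then show ?case by simp
        qed
        then have "(\<lambda>n. jump q (sn n)) \<longlonglongrightarrow> jump q t"
          by (rule tendsto_eventually)
        from LIMSEQ_unique[OF s_lim this] show ?thesis by simp
      next
        case True
        show ?thesis
        proof (rule ccontr)
          assume "jump q t \<noteq> c"
          then have D: "\<bar>jump q t\<bar>/3 > 0" using True by simp
          obtain d where d: "d > 0" and EVS: "\<forall>\<^sub>F n in sequentially. \<forall>i j. (i < k n \<and> pt n i < t \<and> t \<le> pt n (Suc i)) \<longrightarrow>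
             j < k n \<longrightarrow> j \<noteq> i \<longrightarrow> \<bar>pt n j - t\<bar> < d \<longrightarrow>
             \<bar>(u (pt n (Suc j)) - u (pt n j)) * (v (pt n (Suc j)) - v (pt n j))\<bar> \<le> \<bar>jump q t\<bar>/3"
            using incr_small[OF ps u v t D] by blast
          have "\<forall>\<^sub>F n in sequentially. False"
            using EVS ev_ok tendstoD[OF rn_lim d] order_tendstoD(1)[OF rn_lim t]
              tendstoD[OF r_lim D] tendstoD[OF a_lim D]
          proof eventually_elim
            case (elim n)
            show False
            proof (cases "\<exists>j<k n. pt n j = rn n")
              case True
              then obtain j where j: "j < k n" "pt n j = rn n" by blast
              have jq: "jump (Q n) (rn n) = a n j"
                unfolding Q_def a_def using qcov_jump_at[OF ps _ j(1), of u v] j elim by simp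
              show False
              proof (cases "j = idx n")
                case True
                have "\<bar>jump (Q n) (rn n) - jump q t\<bar> < \<bar>jump q t\<bar>/3" using elim by (simp add: dist_real_def)
                moreover have "\<bar>jump (Q n) (rn n)\<bar> \<le> \<bar>jump q t\<bar>/3"
                  using elim jq True \<open>c = 0\<close> by (simp add: dist_real_def)
                ultimately show False by (rule abs_tri_false) simp
              next
                case False
                have "\<bar>pt n j - t\<bar> < d" using elim j by (simp add: dist_real_def)
                then have "\<bar>a n j\<bar> \<le> \<bar>jump q t\<bar>/3"
                  using elim(1) elim(2) j False unfolding a_def ok_def by blast
                then have A: "\<bar>jump (Q n) (rn n)\<bar> \<le> \<bar>jump q t\<bar>/3" using jq by simp
                have B: "\<bar>jump (Q n) (rn n) - jump q t\<bar> < \<bar>jump q t\<bar>/3" using elim by (simp add: dist_real_def)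
                show False by (rule abs_tri_false[OF B A]) simp
              qed
            next
              case False
              then have "jump (Q n) (rn n) = 0" unfolding Q_def using qcov_jump_none[OF ps] elim by blast
              then have A: "\<bar>jump (Q n) (rn n)\<bar> \<le> \<bar>jump q t\<bar>/3" by simp
              have B: "\<bar>jump (Q n) (rn n) - jump q t\<bar> < \<bar>jump q t\<bar>/3" using elim by (simp add: dist_real_def)
              show False by (rule abs_tri_false[OF B A]) simp
            qed
          qed
          then show False by simp
        qed
      qed
    qed
    show "(\<lambda>n. jump (qcov pt k n u v) (tn n)) \<longlonglongrightarrow> jump q t"
      using JQ unfolding key Q_def .
  qed
qed

end
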